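(* Every marginally trapped meridian surface $\mathcal M'_m:z(u,v)=u\,l(v)+g(u)e_4$ (respectively $\mathcal M''_m:z(u,v)=u\,l(v)+g(u)e_1$), $u\in I\subset(0,\infty)$, has non-parallel mean curvature vector field, i.e. $DH$ does not vanish identically, where $D$ is the normal connection.
   Context: $\mathbb{R}^4_1$ is $\mathbb{R}^4$ with metric $\langle\cdot,\cdot\rangle$ of signature $(3,1)$ and orthonormal basis $e_1,\dots,e_4$, $\langle e_i,e_i\rangle=1$ ($i\le3$), $\langle e_4,e_4\rangle=-1$. For a spacelike surface, the normal connection $D$ is the normal component of the flat derivative of normal fields, and the mean curvature vector $H$ is half the trace of the second fundamental form; the surface is marginally trapped if $H\neq0$ and $\langle H,H\rangle=0$ everywhere. $\mathcal M'_m$: $l(v)$, $v\in J$, is an arc-length parametrized curve on the unit sphere $S^2(1)\subset\mathrm{span}\{e_1,e_2,e_3\}$, $g$ smooth with $|\dot g|<1$. $\mathcal M''_m$: $l(v)$, $v\in J$, is an arc-length parametrized spacelike curve on the de Sitter sphere $S^2_1(1)=\{V\in\mathrm{span}\{e_2,e_3,e_4\}:\langle V,V\rangle=1\}$, $g$ smooth. These are meridian surfaces on the rotational hypersurfaces obtained by rotating the curve $u\mapsto(u,g(u))$ about the timelike axis $Oe_4$, respectively the spacelike axis $Oe_1$. *)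

theory Defs
  imports "HOL-Analysis.Analysis"
begin

text \<open>Minkowski space R^4_1 modelled as real^4 with the Lorentzian product of
signature (3,1); the basis vectors e_i are the coordinate axes, e_4 timelike.
Indices 1,2,3,4 of the numeral type 4 are four distinct elements.\<close>

definition lprod :: "real^4 \<Rightarrow> real^4 \<Rightarrow> real" where
  "lprod x y = x$1*y$1 + x$2*y$2 + x$3*y$3 - x$4*y$4"

definition e1 :: "real^4" where "e1 = axis 1 1"
definition e4 :: "real^4" where "e4 = axis 4 1"

definition smooth_on :: "(real \<Rightarrow> 'b::real_normed_vector) \<Rightarrow> real set \<Rightarrow> bool" where
  "smooth_on f S \<longleftrightarrow>
     (\<forall>n. \<forall>t\<in>S. ((\<lambda>h s. vector_derivative h (at s)) ^^ n) f differentiable (at t))"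

definition pd_u :: "(real \<Rightarrow> real \<Rightarrow> real^4) \<Rightarrow> real \<Rightarrow> real \<Rightarrow> real^4" where
  "pd_u z u v = vector_derivative (\<lambda>s. z s v) (at u)"

definition pd_v :: "(real \<Rightarrow> real \<Rightarrow> real^4) \<Rightarrow> real \<Rightarrow> real \<Rightarrow> real^4" where
  "pd_v z u v = vector_derivative (\<lambda>s. z u s) (at v)"

definition fE where "fE z u v = lprod (pd_u z u v) (pd_u z u v)"
definition fF where "fF z u v = lprod (pd_u z u v) (pd_v z u v)"
definition fG where "fG z u v = lprod (pd_v z u v) (pd_v z u v)"

definition tan_proj :: "(real \<Rightarrow> real \<Rightarrow> real^4) \<Rightarrow> real \<Rightarrow> real \<Rightarrow> real^4 \<Rightarrow> real^4" where
  "tan_proj z u v w =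
     (let E = fE z u v; F = fF z u v; G = fG z u v; W = E*G - F^2;
          a = lprod w (pd_u z u v); b = lprod w (pd_v z u v)
      in ((G*a - F*b)/W) *\<^sub>R pd_u z u v + ((E*b - F*a)/W) *\<^sub>R pd_v z u v)"

definition nor_proj :: "(real \<Rightarrow> real \<Rightarrow> real^4) \<Rightarrow> real \<Rightarrow> real \<Rightarrow> real^4 \<Rightarrow> real^4" where
  "nor_proj z u v w = w - tan_proj z u v w"

text \<open>Mean curvature vector: half the trace (w.r.t. the first fundamental form)
of the second fundamental form sigma(X,Y) = normal part of the flat derivative.\<close>
definition meanH :: "(real \<Rightarrow> real \<Rightarrow> real^4) \<Rightarrow> real \<Rightarrow> real \<Rightarrow> real^4" where
  "meanH z u v =
     (let E = fE z u v; F = fF z u v; G = fG z u v; W = E*G - F^2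
      in (1 / (2*W)) *\<^sub>R
           (G *\<^sub>R nor_proj z u v (pd_u (pd_u z) u v)
            - (2*F) *\<^sub>R nor_proj z u v (pd_v (pd_u z) u v)
            + E *\<^sub>R nor_proj z u v (pd_v (pd_v z) u v)))"

definition marginally_trapped :: "(real \<Rightarrow> real \<Rightarrow> real^4) \<Rightarrow> real set \<Rightarrow> real set \<Rightarrow> bool" where
  "marginally_trapped z I J \<longleftrightarrow>
     (\<forall>u\<in>I. \<forall>v\<in>J. meanH z u v \<noteq> 0 \<and> lprod (meanH z u v) (meanH z u v) = 0)"

text \<open>H is parallel in the normal bundle: D H = 0 identically, i.e. the normal
components of dH/du and dH/dv vanish at every point.\<close>
definition parallel_H :: "(real \<Rightarrow> real \<Rightarrow> real^4) \<Rightarrow> real set \<Rightarrow> real set \<Rightarrow> bool" where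
  "parallel_H z I J \<longleftrightarrow>
     (\<forall>u\<in>I. \<forall>v\<in>J. nor_proj z u v (pd_u (meanH z) u v) = 0
                   \<and> nor_proj z u v (pd_v (meanH z) u v) = 0)"

definition meridian1 :: "(real \<Rightarrow> real^4) \<Rightarrow> (real \<Rightarrow> real) \<Rightarrow> real \<Rightarrow> real \<Rightarrow> real^4" where
  "meridian1 l g = (\<lambda>u v. u *\<^sub>R l v + g u *\<^sub>R e4)"

definition meridian2 :: "(real \<Rightarrow> real^4) \<Rightarrow> (real \<Rightarrow> real) \<Rightarrow> real \<Rightarrow> real \<Rightarrow> real^4" where
  "meridian2 l g = (\<lambda>u v. u *\<^sub>R l v + g u *\<^sub>R e1)"

definition param_domains :: "real set \<Rightarrow> real set \<Rightarrow> bool" where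
  "param_domains I J \<longleftrightarrow> open I \<and> is_interval I \<and> I \<noteq> {} \<and> I \<subseteq> {0<..}
                          \<and> open J \<and> is_interval J \<and> J \<noteq> {}"

end

theory Submission
  imports Defs
begin

lemma vd_nth: "(f has_vector_derivative f') F \<Longrightarrow> ((\<lambda>s. f s $ i) has_real_derivative (f' $ i)) F"
  unfolding has_real_derivative_iff_has_vector_derivative has_vector_derivative_def
  using bounded_linear.has_derivative[OF bounded_linear_vec_nth, of f "\<lambda>x. x *\<^sub>R f'" F i]
  by (simp add: mult.commute)


lemma lprod_deriv:
  assumes "(f has_vector_derivative f') (at t)" "(h has_vector_derivative h') (at t)"
  shows "((\<lambda>s. lprod (f s) (h s)) has_real_derivative (lprod f' (h t) + lprod (f t) h')) (at t)"
proof -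
  note d = vd_nth[OF assms(1)] vd_nth[OF assms(2)]
  have "((\<lambda>s. f s$1*h s$1 + f s$2*h s$2 + f s$3*h s$3 - f s$4*h s$4) has_real_derivative
     ((f'$1*h t$1 + f t$1*h'$1) + (f'$2*h t$2 + f t$2*h'$2) + (f'$3*h t$3 + f t$3*h'$3) - (f'$4*h t$4 + f t$4*h'$4))) (at t)"
    by (intro DERIV_diff DERIV_add; rule DERIV_cong[OF DERIV_mult[OF d(1) d(2)]]; simp add: algebra_simps)
  then show ?thesis unfolding lprod_def by (simp add: algebra_simps)
qed

lemma vd_eq:
  assumes "open S" "u \<in> S" "\<And>s. s \<in> S \<Longrightarrow> f s = h s" "(h has_vector_derivative d) (at u)"
  shows "vector_derivative f (at u) = d"
  by (metis assms has_vector_derivative_transform_within_open vector_derivative_at)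

lemma const_deriv0:
  assumes "open S" "u \<in> S" "\<And>s. s \<in> S \<Longrightarrow> f s = c" "(f has_real_derivative d) (at u)"
  shows "d = 0"
proof -
  have "(f has_real_derivative 0) (at u)"
    by (rule has_field_derivative_transform_within_open[of "\<lambda>_. c" 0 u S]) (use assms in auto)
  then show ?thesis using assms(4) DERIV_unique by blast
qed

lemma smooth_D:
  assumes "smooth_on f S" "t \<in> S"
  shows "(f has_vector_derivative vector_derivative f (at t)) (at t)"
    "((\<lambda>s. vector_derivative f (at s)) has_vector_derivative vector_derivative (\<lambda>s. vector_derivative f (at s)) (at t)) (at t)"
    "((\<lambda>r. vector_derivative (\<lambda>s. vector_derivative f (at s)) (at r)) has_vector_derivative
        vector_derivative (\<lambda>r. vector_derivative (\<lambda>s. vector_derivative f (at s)) (at r)) (at t)) (at t)"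
proof -
  have a: "\<And>n. ((\<lambda>h s. vector_derivative h (at s)) ^^ n) f differentiable (at t)"
    using assms unfolding smooth_on_def by blast
  show "(f has_vector_derivative vector_derivative f (at t)) (at t)"
    using a[of 0] by (simp add: vector_derivative_works)
  show "((\<lambda>s. vector_derivative f (at s)) has_vector_derivative vector_derivative (\<lambda>s. vector_derivative f (at s)) (at t)) (at t)"
    using a[of 1] by (simp add: vector_derivative_works)
  show "((\<lambda>r. vector_derivative (\<lambda>s. vector_derivative f (at s)) (at r)) has_vector_derivative
        vector_derivative (\<lambda>r. vector_derivative (\<lambda>s. vector_derivative f (at s)) (at r)) (at t)) (at t)"
    using a[of 2] by (simp add: vector_derivative_works numeral_2_eq_2)
qed

lemma null3:
  fixes a2 a3 a4 b2 b3 b4 w2 w3 w4 :: real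
  assumes "a2*a2+a3*a3-a4*a4 = 1" "b2*b2+b3*b3-b4*b4 = 1" "a2*b2+a3*b3-a4*b4 = 0"
    "w2*a2+w3*a3-w4*a4 = 0" "w2*b2+w3*b3-w4*b4 = 0" "w2*w2+w3*w3-w4*w4 = 0"
  shows "w2 = 0 \<and> w3 = 0 \<and> w4 = 0"
proof -
  let ?D = "a2*(b3*w4-b4*w3) - a3*(b2*w4-b4*w2) + a4*(b2*w3-b3*w2)"
  have "?D^2 = 0" using assms by algebra
  then have D: "?D = 0" by simp
  show ?thesis using assms D by algebra
qed

lemma lprod_sym: "lprod x y = lprod y x" unfolding lprod_def by (simp add: mult.commute)
lemma lprod_simps[simp]:
  "lprod (x + y) z = lprod x z + lprod y z" "lprod z (x + y) = lprod z x + lprod z y"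
  "lprod (x - y) z = lprod x z - lprod y z" "lprod z (x - y) = lprod z x - lprod z y"
  "lprod (r *\<^sub>R x) z = r * lprod x z" "lprod z (r *\<^sub>R x) = r * lprod z x"
  "lprod (- x) z = - lprod x z" "lprod z (- x) = - lprod z x"
  "lprod 0 z = 0" "lprod z 0 = 0"
  unfolding lprod_def by (simp_all add: algebra_simps)

lemma sc_deriv: "(f has_real_derivative f') (at u) \<Longrightarrow> ((\<lambda>s. f s *\<^sub>R c) has_vector_derivative f' *\<^sub>R c) (at u)"
  using has_vector_derivative_scaleR[of f f' u UNIV "\<lambda>_. c" 0] by simp

lemma sc_right: "(f has_vector_derivative f') F \<Longrightarrow> ((\<lambda>s. c *\<^sub>R f s) has_vector_derivative c *\<^sub>R f') F"
  by (rule bounded_linear.has_vector_derivative[OF bounded_linear_scaleR_right])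

lemma gen:
  fixes l :: "real \<Rightarrow> real^4" and g :: "real \<Rightarrow> real" and e :: "real^4" and \<epsilon> :: real
  assumes pd: "param_domains I J" and sl: "smooth_on l J" and sg: "smooth_on g I"
    and hl: "\<forall>v\<in>J. lprod (l v) e = 0 \<and> lprod (l v) (l v) = 1
                     \<and> lprod (vector_derivative l (at v)) (vector_derivative l (at v)) = 1"
    and he: "lprod e e = \<epsilon>" and heps: "\<epsilon> = 1 \<or> \<epsilon> = -1"
    and hE: "\<forall>u\<in>I. 1 + \<epsilon> * (vector_derivative g (at u))^2 \<noteq> 0"
    and mt: "marginally_trapped (\<lambda>u v. u *\<^sub>R l v + g u *\<^sub>R e) I J"
    and par: "parallel_H (\<lambda>u v. u *\<^sub>R l v + g u *\<^sub>R e) I J"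
  shows "\<exists>w v. v \<in> J \<and> w \<noteq> 0 \<and> lprod w w = 0 \<and> lprod w e = 0 \<and> lprod w (l v) = 0
     \<and> lprod w (vector_derivative l (at v)) = 0 \<and> lprod (l v) (l v) = 1
     \<and> lprod (vector_derivative l (at v)) (vector_derivative l (at v)) = 1
     \<and> lprod (l v) (vector_derivative l (at v)) = 0 \<and> lprod (l v) e = 0
     \<and> lprod (vector_derivative l (at v)) e = 0"
proof -
  define z where "z = (\<lambda>u v. u *\<^sub>R l v + g u *\<^sub>R e)"
  define l1 where "l1 = (\<lambda>s. vector_derivative l (at s))"
  define l2 where "l2 = (\<lambda>s. vector_derivative l1 (at s))"
  define g1 where "g1 = (\<lambda>s. vector_derivative g (at s))"
  define g2 where "g2 = (\<lambda>s. vector_derivative g1 (at s))"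
  define g3 where "g3 = (\<lambda>s. vector_derivative g2 (at s))"
  have oI: "open I" and oJ: "open J" and I0: "I \<subseteq> {0<..}" and nI: "I \<noteq> {}" and nJ: "J \<noteq> {}"
    using pd unfolding param_domains_def by auto
  have dl: "\<And>t. t \<in> J \<Longrightarrow> (l has_vector_derivative l1 t) (at t)"
    and dl1: "\<And>t. t \<in> J \<Longrightarrow> (l1 has_vector_derivative l2 t) (at t)"
    using smooth_D[OF sl] unfolding l1_def l2_def by auto
  have dg: "\<And>t. t \<in> I \<Longrightarrow> (g has_real_derivative g1 t) (at t)"
    and dg1: "\<And>t. t \<in> I \<Longrightarrow> (g1 has_real_derivative g2 t) (at t)"
    and dg2: "\<And>t. t \<in> I \<Longrightarrow> (g2 has_real_derivative g3 t) (at t)"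
    using smooth_D[OF sg] unfolding g1_def g2_def g3_def has_real_derivative_iff_has_vector_derivative by auto
  have le: "\<And>v. v \<in> J \<Longrightarrow> lprod (l v) e = 0" and ll: "\<And>v. v \<in> J \<Longrightarrow> lprod (l v) (l v) = 1"
    and l11: "\<And>v. v \<in> J \<Longrightarrow> lprod (l1 v) (l1 v) = 1"
    using hl unfolding l1_def by auto
  have o1: "lprod (l v) (l1 v) = 0" if "v \<in> J" for v
  proof -
    have "lprod (l1 v) (l v) + lprod (l v) (l1 v) = 0"
      by (rule const_deriv0[OF oJ that _ lprod_deriv[OF dl[OF that] dl[OF that]]]) (use ll in auto)
    then show ?thesis by (simp add: lprod_sym)
  qed
  have o2: "lprod (l1 v) (l2 v) = 0" if "v \<in> J" for v
  proof -
    have "lprod (l2 v) (l1 v) + lprod (l1 v) (l2 v) = 0"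
      by (rule const_deriv0[OF oJ that _ lprod_deriv[OF dl1[OF that] dl1[OF that]]]) (use l11 in auto)
    then show ?thesis by (simp add: lprod_sym)
  qed
  have o3: "lprod (l v) (l2 v) = -1" if "v \<in> J" for v
  proof -
    have "lprod (l1 v) (l1 v) + lprod (l v) (l2 v) = 0"
      by (rule const_deriv0[OF oJ that _ lprod_deriv[OF dl[OF that] dl1[OF that]]]) (use o1 in auto)
    then show ?thesis using l11[OF that] by simp
  qed
  have o4: "lprod (l1 v) e = 0" if "v \<in> J" for v
  proof -
    have "lprod (l1 v) e + lprod (l v) 0 = 0"
      by (rule const_deriv0[OF oJ that _ lprod_deriv[OF dl[OF that] has_vector_derivative_const]]) (use le in auto)
    then show ?thesis by simp
  qed
  have o5: "lprod (l2 v) e = 0" if "v \<in> J" for v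
  proof -
    have "lprod (l2 v) e + lprod (l1 v) 0 = 0"
      by (rule const_deriv0[OF oJ that _ lprod_deriv[OF dl1[OF that] has_vector_derivative_const]]) (use o4 in auto)
    then show ?thesis by simp
  qed
  obtain u0 v0 where u0: "u0 \<in> I" and v0: "v0 \<in> J" using nI nJ by blast
  have zu: "pd_u z u v = l v + g1 u *\<^sub>R e" if "u \<in> I" for u v
  proof -
    have "((\<lambda>s. z s v) has_vector_derivative (1 *\<^sub>R l v + g1 u *\<^sub>R e)) (at u)"
      unfolding z_def by (intro has_vector_derivative_add sc_deriv dg[OF that] DERIV_ident)
    then show ?thesis unfolding pd_u_def by (simp add: vector_derivative_at)
  qed
  have zv: "pd_v z u v = u *\<^sub>R l1 v" if "v \<in> J" for u v
  proof -
    have "((\<lambda>s. z u s) has_vector_derivative (u *\<^sub>R l1 v + 0)) (at v)"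
      unfolding z_def by (intro has_vector_derivative_add has_vector_derivative_const
          sc_right dl[OF that])
    then show ?thesis unfolding pd_v_def by (simp add: vector_derivative_at)
  qed
  have zuu: "pd_u (pd_u z) u v = g2 u *\<^sub>R e" if "u \<in> I" for u v
    unfolding pd_u_def[of "pd_u z"]
    by (rule vd_eq[OF oI that, of _ "\<lambda>s. l v + g1 s *\<^sub>R e"])
       (auto simp: zu intro!: has_vector_derivative_add[where f'=0, simplified] sc_deriv dg1 that)
  have zuv: "pd_v (pd_u z) u v = l1 v" if "u \<in> I" "v \<in> J" for u v
    unfolding pd_v_def[of "pd_u z"]
    by (rule vd_eq[OF oJ that(2), of _ "\<lambda>s. l s + g1 u *\<^sub>R e"])
       (auto simp: zu[OF that(1)] intro!: has_vector_derivative_add[where g'=0, simplified] dl that)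
  have zvv: "pd_v (pd_v z) u v = u *\<^sub>R l2 v" if "v \<in> J" for u v
    unfolding pd_v_def[of "pd_v z"]
    by (rule vd_eq[OF oJ that, of _ "\<lambda>s. u *\<^sub>R l1 s"])
       (auto simp: zv intro!: sc_right dl1 that)
  define E where "E = (\<lambda>s. 1 + \<epsilon> * (g1 s)^2)"
  define A where "A = (\<lambda>s. (g2 s / (E s)^2 + g1 s / (s * E s)) / 2)"
  define B where "B = (\<lambda>s. (1 / (s * E s) - \<epsilon> * g1 s * g2 s / (E s)^2) / 2)"
  define Hc where "Hc = (\<lambda>s v. A s *\<^sub>R e + B s *\<^sub>R l v + (1 / (2 * s)) *\<^sub>R l2 v)"
  have Epos: "E u \<noteq> 0" if "u \<in> I" for u using hE that unfolding E_def g1_def by auto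
  have upos: "u > 0" if "u \<in> I" for u using I0 that by auto
  have lesym: "lprod e (l v) = 0" "lprod e (l1 v) = 0" "lprod e (l2 v) = 0"
      "lprod (l1 v) (l v) = 0" "lprod (l2 v) (l1 v) = 0" "lprod (l2 v) (l v) = -1"
      if "v \<in> J" for v
    using le[OF that] o1[OF that] o2[OF that] o3[OF that] o4[OF that] o5[OF that] by (simp_all add: lprod_sym)
  have H: "meanH z u v = Hc u v" if "u \<in> I" "v \<in> J" for u v
  proof -
    have fe: "fE z u v = E u" unfolding fE_def zu[OF that(1)] E_def
      using le[OF that(2)] lesym[OF that(2)] ll[OF that(2)] he by (simp add: power2_eq_square)
    have ff: "fF z u v = 0" unfolding fF_def zu[OF that(1)] zv[OF that(2)]
      using o1[OF that(2)] lesym[OF that(2)] by simp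
    have fg: "fG z u v = u^2" unfolding fG_def zv[OF that(2)]
      using l11[OF that(2)] by (simp add: power2_eq_square)
    have "meanH z u v = (1 / (2 * (E u * u^2))) *\<^sub>R (u^2 *\<^sub>R (g2 u *\<^sub>R e -
       ((u^2 * (\<epsilon> * g2 u * g1 u)) / (E u * u^2)) *\<^sub>R (l v + g1 u *\<^sub>R e))
       + E u *\<^sub>R (u *\<^sub>R l2 v + ((u^2 * u) / (E u * u^2)) *\<^sub>R (l v + g1 u *\<^sub>R e)))"
      unfolding meanH_def Let_def nor_proj_def tan_proj_def fe ff fg zu[OF that(1)] zv[OF that(2)]
         zuu[OF that(1)] zuv[OF that] zvv[OF that(2)]
      using le[OF that(2)] lesym[OF that(2)] ll[OF that(2)] he o1[OF that(2)] o2[OF that(2)] o3[OF that(2)]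
         o4[OF that(2)] o5[OF that(2)]
      by (simp add: algebra_simps)
    also have "\<dots> = ((1 / (2 * (E u * u^2))) * (u^2 * g2 u - u^2 * ((u^2 * (\<epsilon> * g2 u * g1 u)) / (E u * u^2)) * g1 u
           + E u * ((u^2 * u) / (E u * u^2)) * g1 u)) *\<^sub>R e
        + ((1 / (2 * (E u * u^2))) * (- (u^2) * ((u^2 * (\<epsilon> * g2 u * g1 u)) / (E u * u^2))
           + E u * ((u^2 * u) / (E u * u^2)))) *\<^sub>R l v
        + ((1 / (2 * (E u * u^2))) * (E u * u)) *\<^sub>R l2 v"
      by (simp add: vec_eq_iff algebra_simps)
    also have "\<dots> = Hc u v"
    proof -
      have ee: "\<epsilon> * (g1 u)^2 = E u - 1" unfolding E_def by simp
      have c1: "(1 / (2 * (E u * u^2))) * (u^2 * g2 u - u^2 * ((u^2 * (\<epsilon> * g2 u * g1 u)) / (E u * u^2)) * g1 u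
           + E u * ((u^2 * u) / (E u * u^2)) * g1 u) = A u"
      proof -
        have "u^2 * g2 u - u^2 * ((u^2 * (\<epsilon> * g2 u * g1 u)) / (E u * u^2)) * g1 u
           = u^2 * g2 u * (1 - \<epsilon> * (g1 u)^2 / E u)"
          using Epos[OF that(1)] upos[OF that(1)] by (simp add: field_simps power2_eq_square)
        also have "\<dots> = u^2 * g2 u / E u" using Epos[OF that(1)] unfolding ee by (simp add: field_simps)
        finally show ?thesis unfolding A_def using Epos[OF that(1)] upos[OF that(1)]
          by (simp add: field_simps power2_eq_square)
      qed
      have c2: "(1 / (2 * (E u * u^2))) * (- (u^2) * ((u^2 * (\<epsilon> * g2 u * g1 u)) / (E u * u^2))
           + E u * ((u^2 * u) / (E u * u^2))) = B u"
        unfolding B_def using Epos[OF that(1)] upos[OF that(1)] by (simp add: field_simps power2_eq_square)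
      have c3: "(1 / (2 * (E u * u^2))) * (E u * u) = 1 / (2 * u)"
        using Epos[OF that(1)] upos[OF that(1)] by (simp add: field_simps power2_eq_square)
      show ?thesis unfolding c1 c2 c3 Hc_def ..
    qed
    finally show ?thesis .
  qed
  have E0: "1 + \<epsilon> * (g1 u0)^2 \<noteq> 0" using Epos[OF u0] unfolding E_def .
  have u00: "u0 \<noteq> 0" using upos[OF u0] by simp
  have "\<exists>A'. (A has_real_derivative A') (at u0)"
    unfolding A_def E_def using E0 u00
    by (auto intro!: exI derivative_eq_intros dg2[OF u0] dg1[OF u0] dg[OF u0])
  then obtain A' where dA: "(A has_real_derivative A') (at u0)" by blast
  have "\<exists>B'. (B has_real_derivative B') (at u0)"
    unfolding B_def E_def using E0 u00
    by (auto intro!: exI derivative_eq_intros dg2[OF u0] dg1[OF u0] dg[OF u0])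
  then obtain B' where dB: "(B has_real_derivative B') (at u0)" by blast
  have dC: "((\<lambda>s. 1 / (2 * s)) has_real_derivative (- 1 / (2 * u0^2))) (at u0)"
    using u00 by (auto intro!: derivative_eq_intros simp: field_simps power2_eq_square)
  have P: "pd_u (meanH z) u0 v0 = A' *\<^sub>R e + B' *\<^sub>R l v0 + (- 1 / (2 * u0^2)) *\<^sub>R l2 v0"
  proof -
    have "((\<lambda>s. Hc s v0) has_vector_derivative A' *\<^sub>R e + B' *\<^sub>R l v0 + (- 1 / (2 * u0^2)) *\<^sub>R l2 v0) (at u0)"
      unfolding Hc_def by (intro has_vector_derivative_add sc_deriv dA dB dC)
    then show ?thesis unfolding pd_u_def[of "meanH z"]
      by (rule vd_eq[OF oI u0, rotated]) (simp add: H v0)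
  qed
  define w where "w = l2 v0 + l v0"
  have ew: "lprod e w = 0" "lprod (l v0) w = 0" "lprod (l1 v0) w = 0"
    unfolding w_def using lesym[OF v0] ll[OF v0] o1[OF v0] o2[OF v0] o3[OF v0] by simp_all
  have "nor_proj z u0 v0 (pd_u (meanH z) u0 v0) = 0" using par u0 v0 unfolding parallel_H_def z_def by blast
  then have "pd_u (meanH z) u0 v0 = tan_proj z u0 v0 (pd_u (meanH z) u0 v0)" unfolding nor_proj_def by simp
  then have "\<exists>a b. pd_u (meanH z) u0 v0 = a *\<^sub>R (l v0 + g1 u0 *\<^sub>R e) + b *\<^sub>R (u0 *\<^sub>R l1 v0)"
    unfolding tan_proj_def Let_def zu[OF u0] zv[OF v0] by blast
  then obtain a b where ab: "pd_u (meanH z) u0 v0 = a *\<^sub>R (l v0 + g1 u0 *\<^sub>R e) + b *\<^sub>R (u0 *\<^sub>R l1 v0)" by blast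
  have "lprod (pd_u (meanH z) u0 v0) w = 0"
    unfolding ab using ew by (simp add: lprod_sym)
  then have "lprod (l2 v0) w = 0" unfolding P using ew u00 by (simp add: lprod_sym)
  then have ww: "lprod w w = 0" unfolding w_def using o3[OF v0] lesym[OF v0] ll[OF v0] by (simp add: lprod_sym)
  have wn: "w \<noteq> 0"
  proof
    assume "w = 0"
    then have l2e: "l2 v0 = - l v0" unfolding w_def by (simp add: add_eq_0_iff)
    have cc: "B u0 - 1 / (2 * u0) = - \<epsilon> * g1 u0 * A u0"
    proof -
      have ee: "\<epsilon> * (g1 u0)^2 = E u0 - 1" unfolding E_def by simp
      have "B u0 - 1 / (2 * u0) = (- \<epsilon> * g1 u0 * g2 u0 / (E u0)^2 + (1 - E u0) / (u0 * E u0)) / 2"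
        unfolding B_def using Epos[OF u0] u00 by (simp add: field_simps power2_eq_square)
      also have "\<dots> = (- \<epsilon> * g1 u0 * g2 u0 / (E u0)^2 - \<epsilon> * (g1 u0)^2 / (u0 * E u0)) / 2"
        unfolding ee using Epos[OF u0] u00 by (simp add: field_simps)
      also have "\<dots> = - \<epsilon> * g1 u0 * A u0"
        unfolding A_def using Epos[OF u0] u00 by (simp add: field_simps power2_eq_square)
      finally show ?thesis .
    qed
    have H0: "meanH z u0 v0 = A u0 *\<^sub>R e + (B u0 - 1 / (2 * u0)) *\<^sub>R l v0"
      unfolding H[OF u0 v0] Hc_def l2e by (simp add: algebra_simps)
    have "lprod (meanH z u0 v0) (meanH z u0 v0) = 0" using mt u0 v0 unfolding marginally_trapped_def z_def by blast
    then have "(A u0)^2 * \<epsilon> + (B u0 - 1 / (2 * u0))^2 = 0"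
      unfolding H0 using he le[OF v0] lesym[OF v0] ll[OF v0] by (simp add: power2_eq_square algebra_simps)
    then have "(A u0)^2 * (\<epsilon> * E u0) = 0"
      unfolding cc E_def using heps by (auto simp: power2_eq_square algebra_simps)
    then have A0: "A u0 = 0" using Epos[OF u0] heps by auto
    have "meanH z u0 v0 = 0" unfolding H0 cc A0 by simp
    then show False using mt u0 v0 unfolding marginally_trapped_def z_def by blast
  qed
  show ?thesis
    apply (rule exI[of _ w], rule exI[of _ v0])
    using v0 wn ww ew lesym[OF v0] ll[OF v0] l11[OF v0] o1[OF v0] o4[OF v0] le[OF v0]
    unfolding l1_def by (simp add: lprod_sym)
qed


lemma vd_deriv:
  assumes "smooth_on g I" "u \<in> I"
  shows "deriv g u = vector_derivative g (at u)"
  using smooth_D(1)[OF assms] unfolding has_real_derivative_iff_has_vector_derivative[symmetric]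
  by (rule DERIV_imp_deriv)

lemma e4_facts: "lprod e4 e4 = -1" "lprod x e4 = - (x $ 4)" "e4 $ 4 = 1"
  unfolding lprod_def e4_def by (simp_all add: axis_def)
lemma e1_facts: "lprod e1 e1 = 1" "lprod x e1 = x $ 1" "e1 $ 1 = 1"
  unfolding lprod_def e1_def by (simp_all add: axis_def)

theorem mainTheorem12:
  shows "(\<forall>(l :: real \<Rightarrow> real^4) (g :: real \<Rightarrow> real) I J.
            param_domains I J \<and> smooth_on l J \<and> smooth_on g I
            \<and> (\<forall>v\<in>J. l v $ 4 = 0 \<and> lprod (l v) (l v) = 1
                     \<and> lprod (vector_derivative l (at v)) (vector_derivative l (at v)) = 1)
            \<and> (\<forall>u\<in>I. \<bar>deriv g u\<bar> < 1)
            \<and> marginally_trapped (meridian1 l g) I J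
            \<longrightarrow> \<not> parallel_H (meridian1 l g) I J)
       \<and> (\<forall>(l :: real \<Rightarrow> real^4) (g :: real \<Rightarrow> real) I J.
            param_domains I J \<and> smooth_on l J \<and> smooth_on g I
            \<and> (\<forall>v\<in>J. l v $ 1 = 0 \<and> lprod (l v) (l v) = 1
                     \<and> lprod (vector_derivative l (at v)) (vector_derivative l (at v)) = 1)
            \<and> marginally_trapped (meridian2 l g) I J
            \<longrightarrow> \<not> parallel_H (meridian2 l g) I J)"
proof (intro conjI allI impI notI)
  fix l :: "real \<Rightarrow> real^4" and g :: "real \<Rightarrow> real" and I J
  assume h: "param_domains I J \<and> smooth_on l J \<and> smooth_on g I
            \<and> (\<forall>v\<in>J. l v $ 4 = 0 \<and> lprod (l v) (l v) = 1
                     \<and> lprod (vector_derivative l (at v)) (vector_derivative l (at v)) = 1)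
            \<and> (\<forall>u\<in>I. \<bar>deriv g u\<bar> < 1)
            \<and> marginally_trapped (meridian1 l g) I J"
    and p: "parallel_H (meridian1 l g) I J"
  have mz: "meridian1 l g = (\<lambda>u v. u *\<^sub>R l v + g u *\<^sub>R e4)" unfolding meridian1_def ..
  have hE: "\<forall>u\<in>I. 1 + (-1) * (vector_derivative g (at u))^2 \<noteq> 0"
  proof
    fix u assume u: "u \<in> I"
    have "\<bar>vector_derivative g (at u)\<bar> < 1" using h u vd_deriv[of g I u] by auto
    then have "(vector_derivative g (at u))^2 < 1" by (simp add: abs_square_less_1)
    then show "1 + (-1) * (vector_derivative g (at u))^2 \<noteq> 0" by simp
  qed
  obtain w v where wv: "v \<in> J" "w \<noteq> 0" "lprod w w = 0" "lprod w e4 = 0"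
    using gen[of I J l g e4 "-1"] h p hE unfolding mz by (auto simp: e4_facts)
  have "w $ 4 = 0" using wv(4) by (simp add: e4_facts)
  then have "(w$1)^2 + (w$2)^2 + (w$3)^2 = 0" using wv(3) unfolding lprod_def by (simp add: power2_eq_square)
  then have "w$1 = 0 \<and> w$2 = 0 \<and> w$3 = 0" by (smt (verit) zero_le_power2 zero_eq_power2)
  then have "w = 0" using \<open>w $ 4 = 0\<close> by (simp add: vec_eq_iff forall_4)
  then show False using wv(2) by simp
next
  fix l :: "real \<Rightarrow> real^4" and g :: "real \<Rightarrow> real" and I J
  assume h: "param_domains I J \<and> smooth_on l J \<and> smooth_on g I
            \<and> (\<forall>v\<in>J. l v $ 1 = 0 \<and> lprod (l v) (l v) = 1
                     \<and> lprod (vector_derivative l (at v)) (vector_derivative l (at v)) = 1)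
            \<and> marginally_trapped (meridian2 l g) I J"
    and p: "parallel_H (meridian2 l g) I J"
  have mz: "meridian2 l g = (\<lambda>u v. u *\<^sub>R l v + g u *\<^sub>R e1)" unfolding meridian2_def ..
  have hE: "\<forall>u\<in>I. 1 + 1 * (vector_derivative g (at u))^2 \<noteq> 0"
    by (auto simp: add_pos_nonneg[of 1, THEN less_imp_neq, symmetric])
  obtain w v where wv: "v \<in> J" "w \<noteq> 0" "lprod w w = 0" "lprod w e1 = 0" "lprod w (l v) = 0"
     "lprod w (vector_derivative l (at v)) = 0" "lprod (l v) (l v) = 1"
     "lprod (vector_derivative l (at v)) (vector_derivative l (at v)) = 1"
     "lprod (l v) (vector_derivative l (at v)) = 0" "lprod (l v) e1 = 0"
     "lprod (vector_derivative l (at v)) e1 = 0"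
    using gen[of I J l g e1 1] h p hE unfolding mz by (auto simp: e1_facts)
  define a where "a = l v" define b where "b = vector_derivative l (at v)"
  have z1: "w$1 = 0" "a$1 = 0" "b$1 = 0" using wv(4,10,11) unfolding a_def b_def by (simp_all add: e1_facts)
  have "w$2 = 0 \<and> w$3 = 0 \<and> w$4 = 0"
    apply (rule null3[of "a$2" "a$3" "a$4" "b$2" "b$3" "b$4"])
    using wv(3,5,6,7,8,9) z1 unfolding a_def[symmetric] b_def[symmetric] lprod_def by (simp_all add: mult.commute)
  then have "w = 0" using z1 by (simp add: vec_eq_iff forall_4)
  then show False using wv(2) by simp
qed

end
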